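(* Let $U,M_1,M_2$ be as below, let $M_3$ be as below, set $M_4=M_1U$, $M_5=M_2U$, and let $G'_E$ be the semigroup generated by $M_1,\dots,M_5$, where $$U=\begin{bmatrix}-1&1&0\\0&1&0\\0&0&1\end{bmatrix},\ M_1=\begin{bmatrix}3&-4&4\\7&-7&8\\6&-6&7\end{bmatrix},\ M_2=\begin{bmatrix}-4&3&4\\-7&7&8\\-6&6&7\end{bmatrix},\ M_3=\begin{bmatrix}1&3&4\\0&7&8\\0&6&7\end{bmatrix}.$$ For $M\in G'_E$ and an associated pair $\langle a,b,c\rangle\in\mathfrak{P}_E$, define $M\langle a,b,c\rangle$ to be the associated pair containing the triple $M(a,b,c)_u$, where $(a,b,c)_u$ is the upper triple of $\langle a,b,c\rangle$ and $M(a,b,c)_u$ is the matrix product with the column vector. Then this defines an action of $G'_E$ on $\mathfrak{P}_E$.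
   Context: An Eisenstein triple is a triple $(a,b,c)\in\mathbb{Z}^3_{\ge0}\setminus\{(0,0,0)\}$ with $a^2-ab+b^2=c^2$; it is primitive if $a\le b$ and $\gcd(a,b,c)=1$. For a primitive Eisenstein triple $(a,b,c)$, $(b-a,b,c)$ is also one; the unordered pair of these two triples is the associated pair $\langle a,b,c\rangle$, and $\mathfrak{P}_E$ is the set of all associated pairs. In an associated pair, the triple with $b>2a$ is called the upper triple, denoted $(a,b,c)_u$. *)

theory Defs
  imports "HOL-Analysis.Analysis"
begin

type_synonym triple = "int \<times> int \<times> int"

definition eisenstein_triple :: "triple \<Rightarrow> bool" where
  "eisenstein_triple t = (case t of (a, b, c) \<Rightarrow>
     a \<ge> 0 \<and> b \<ge> 0 \<and> c \<ge> 0 \<and> (a, b, c) \<noteq> (0, 0, 0) \<and> a^2 - a*b + b^2 = c^2)"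

definition primitive_eisenstein :: "triple \<Rightarrow> bool" where
  "primitive_eisenstein t = (case t of (a, b, c) \<Rightarrow>
     eisenstein_triple (a, b, c) \<and> a \<le> b \<and> gcd (gcd a b) c = 1)"

definition assoc_pair :: "triple \<Rightarrow> triple set" where
  "assoc_pair t = (case t of (a, b, c) \<Rightarrow> {(a, b, c), (b - a, b, c)})"

definition PE :: "triple set set" where
  "PE = assoc_pair ` {t. primitive_eisenstein t}"

definition upper :: "triple set \<Rightarrow> triple" where
  "upper P = (THE t. t \<in> P \<and> (case t of (a, b, c) \<Rightarrow> b > 2 * a))"

definition mat_app :: "int^3^3 \<Rightarrow> triple \<Rightarrow> triple" where
  "mat_app M t = (case t of (a, b, c) \<Rightarrow>
     (let v = M *v vector [a, b, c] in (v$1, v$2, v$3)))"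

definition U_mat :: "int^3^3" where
  "U_mat = vector [vector [-1, 1, 0], vector [0, 1, 0], vector [0, 0, 1]]"

definition M1 :: "int^3^3" where
  "M1 = vector [vector [3, -4, 4], vector [7, -7, 8], vector [6, -6, 7]]"

definition M2 :: "int^3^3" where
  "M2 = vector [vector [-4, 3, 4], vector [-7, 7, 8], vector [-6, 6, 7]]"

definition M3 :: "int^3^3" where
  "M3 = vector [vector [1, 3, 4], vector [0, 7, 8], vector [0, 6, 7]]"

definition M4 :: "int^3^3" where
  "M4 = M1 ** U_mat"

definition M5 :: "int^3^3" where
  "M5 = M2 ** U_mat"

inductive_set GE' :: "(int^3^3) set" where
  gen: "M \<in> {M1, M2, M3, M4, M5} \<Longrightarrow> M \<in> GE'"
| mult: "M \<in> GE' \<Longrightarrow> N \<in> GE' \<Longrightarrow> M ** N \<in> GE'"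

definition act :: "int^3^3 \<Rightarrow> triple set \<Rightarrow> triple set" where
  "act M P = (THE Q. Q \<in> PE \<and> mat_app M (upper P) \<in> Q)"

end

theory Submission imports Defs begin

lemma vec3_eq: "vector [v$1, v$2, v$3] = (v::'a::zero^3)"
  by (simp add: vec_eq_iff forall_3 vector_3)

lemma mat_app_mult: "mat_app (A ** B) t = mat_app A (mat_app B t)"
  by (cases t) (simp add: mat_app_def Let_def vec3_eq matrix_vector_mul_assoc)

lemma mat_app_M1: "mat_app M1 (a,b,c) = (3*a-4*b+4*c, 7*a-7*b+8*c, 6*a-6*b+7*c)"
  by (simp add: mat_app_def M1_def matrix_vector_mult_def sum_3 vector_3)
lemma mat_app_M2: "mat_app M2 (a,b,c) = (-4*a+3*b+4*c, -7*a+7*b+8*c, -6*a+6*b+7*c)"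
  by (simp add: mat_app_def M2_def matrix_vector_mult_def sum_3 vector_3)
lemma mat_app_M3: "mat_app M3 (a,b,c) = (a+3*b+4*c, 7*b+8*c, 6*b+7*c)"
  by (simp add: mat_app_def M3_def matrix_vector_mult_def sum_3 vector_3)
lemma mat_app_U: "mat_app U_mat (a,b,c) = (b-a, b, c)"
  by (simp add: mat_app_def U_mat_def matrix_vector_mult_def sum_3 vector_3)
lemma mat_app_M4: "mat_app M4 (a,b,c) = (-3*a-b+4*c, -7*a+8*c, -6*a+7*c)"
  by (simp add: M4_def mat_app_mult mat_app_U mat_app_M1 algebra_simps)
lemma mat_app_M5: "mat_app M5 (a,b,c) = (4*a-b+4*c, 7*a+8*c, 6*a+7*c)"
  by (simp add: M5_def mat_app_mult mat_app_U mat_app_M2 algebra_simps)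

definition good :: "triple \<Rightarrow> bool" where
  "good t = (case t of (x,y,z) \<Rightarrow> 0 \<le> x \<and> 2*x < y \<and> 0 \<le> z \<and> x^2 - x*y + y^2 = z^2 \<and> gcd (gcd x y) z = 1)"

lemma gcd_pres:
  fixes a b c x y z :: int
  assumes g: "gcd (gcd a b) c = 1"
    and ha: "a = pa*x+qa*y+ra*z" and hb: "b = pb*x+qb*y+rb*z" and hc: "c = pc*x+qc*y+rc*z"
  shows "gcd (gcd x y) z = 1"
proof -
  let ?g = "gcd (gcd x y) z"
  have dx: "?g dvd x" and dy: "?g dvd y" and dz: "?g dvd z"
    by (meson dvd_trans gcd_dvd1 gcd_dvd2)+
  have "?g dvd a" unfolding ha using dx dy dz by (intro dvd_add dvd_mult) auto
  moreover have "?g dvd b" unfolding hb using dx dy dz by (intro dvd_add dvd_mult) auto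
  moreover have "?g dvd c" unfolding hc using dx dy dz by (intro dvd_add dvd_mult) auto
  ultimately have "?g dvd 1" using g by (metis gcd_greatest)
  then show ?thesis by simp
qed

lemma good_facts:
  fixes a b c :: int
  assumes "good (a,b,c)"
  shows "b - a \<le> c" "4*b - 3*a \<le> 4*c" "3*a + b \<le> 4*c"
proof -
  have a: "0 \<le> a" "2*a < b" "0 \<le> c" "a^2 - a*b + b^2 = c^2"
    using assms by (auto simp: good_def)
  have ab: "0 \<le> a*b" using a by simp
  have e0: "(b-a)^2 = (a^2-a*b+b^2) - a*b" by (simp add: power2_eq_square algebra_simps)
  have "(b-a)^2 \<le> c^2" using e0 a(4) ab by linarith
  then show "b - a \<le> c" using a(3) by (rule power2_le_imp_le)
  have aa: "a*a \<ge> 0" by simp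
  have e1: "16*(a^2-a*b+b^2) - (4*b-3*a)^2 = 8*(a*b)+7*(a*a)" by (simp add: power2_eq_square algebra_simps)
  have "(4*c)^2 = 16*(a^2-a*b+b^2)" using a(4) by (simp only: power_mult_distrib) simp
  then have "(4*b-3*a)^2 \<le> (4*c)^2" using e1 aa ab by linarith
  then show "4*b - 3*a \<le> 4*c" by (rule power2_le_imp_le) (use a(3) in simp)
  have "0 \<le> (15*b-7*a)*(b-a)" using a by (intro mult_nonneg_nonneg) auto
  moreover have e2: "16*(a^2-a*b+b^2) - (3*a+b)^2 = (15*b-7*a)*(b-a)" by (simp add: power2_eq_square algebra_simps)
  moreover have "(4*c)^2 = 16*(a^2-a*b+b^2)" using a(4) by simp
  ultimately have "(3*a+b)^2 \<le> (4*c)^2" by linarith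
  then show "3*a + b \<le> 4*c" by (rule power2_le_imp_le) (use a(3) in simp)
qed

lemma good_lin:
  fixes a b c x y z :: int
  assumes G: "good (a,b,c)" and "0 \<le> x" "2*x < y" "0 \<le> z"
    and q: "x^2 - x*y + y^2 - z^2 = a^2 - a*b + b^2 - c^2"
    and ha: "a = pa*x+qa*y+ra*z" and hb: "b = pb*x+qb*y+rb*z" and hc: "c = pc*x+qc*y+rc*z"
  shows "good (x,y,z)"
proof -
  from G have a: "a^2 - a*b + b^2 = c^2" "gcd (gcd a b) c = 1"
    by (auto simp: good_def)
  have "gcd (gcd x y) z = 1" by (rule gcd_pres[OF a(2) ha hb hc])
  moreover have "x^2 - x*y + y^2 = z^2" using q a(1) by linarith
  ultimately show ?thesis using assms(2-4) by (simp add: good_def)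
qed

lemma good_M1: "good t \<Longrightarrow> good (mat_app M1 t)"
proof (cases t)
  case (fields a b c)
  assume g: "good t"
  then have G: "good (a,b,c)" using fields by simp
  note f = good_facts[OF G]
  from G have a: "0 \<le> a" "2*a < b" "0 \<le> c"
    by (auto simp: good_def)
  show ?thesis unfolding fields mat_app_M1
    apply (insert a f, rule good_lin[OF G, where pa="-1" and qa=4 and ra="-4" and pb="-1" and qb="-3" and rb=4 and pc=0 and qc="-6" and rc=7])
    apply linarith+
    by (simp_all add: power2_eq_square algebra_simps)
qed

lemma good_M2: "good t \<Longrightarrow> good (mat_app M2 t)"
proof (cases t)
  case (fields a b c)
  assume g: "good t"
  then have G: "good (a,b,c)" using fields by simp
  note f = good_facts[OF G]
  from G have a: "0 \<le> a" "2*a < b" "0 \<le> c"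
    by (auto simp: good_def)
  show ?thesis unfolding fields mat_app_M2
    apply (insert a f, rule good_lin[OF G, where pa="-1" and qa="-3" and ra="4" and pb="-1" and qb="4" and rb="-4" and pc="0" and qc="-6" and rc="7"])
    apply linarith+
    by (simp_all add: power2_eq_square algebra_simps)
qed

lemma good_M3: "good t \<Longrightarrow> good (mat_app M3 t)"
proof (cases t)
  case (fields a b c)
  assume g: "good t"
  then have G: "good (a,b,c)" using fields by simp
  note f = good_facts[OF G]
  from G have a: "0 \<le> a" "2*a < b" "0 \<le> c"
    by (auto simp: good_def)
  show ?thesis unfolding fields mat_app_M3
    apply (insert a f, rule good_lin[OF G, where pa="1" and qa="3" and ra="-4" and pb="0" and qb="7" and rb="-8" and pc="0" and qc="-6" and rc="7"])
    apply linarith+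
    by (simp_all add: power2_eq_square algebra_simps)
qed

lemma good_M4: "good t \<Longrightarrow> good (mat_app M4 t)"
proof (cases t)
  case (fields a b c)
  assume g: "good t"
  then have G: "good (a,b,c)" using fields by simp
  note f = good_facts[OF G]
  from G have a: "0 \<le> a" "2*a < b" "0 \<le> c"
    by (auto simp: good_def)
  show ?thesis unfolding fields mat_app_M4
    apply (insert a f, rule good_lin[OF G, where pa="0" and qa="-7" and ra="8" and pb="-1" and qb="-3" and rb="4" and pc="0" and qc="-6" and rc="7"])
    apply linarith+
    by (simp_all add: power2_eq_square algebra_simps)
qed

lemma good_M5: "good t \<Longrightarrow> good (mat_app M5 t)"
proof (cases t)
  case (fields a b c)
  assume g: "good t"
  then have G: "good (a,b,c)" using fields by simp
  note f = good_facts[OF G]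
  from G have a: "0 \<le> a" "2*a < b" "0 \<le> c"
    by (auto simp: good_def)
  show ?thesis unfolding fields mat_app_M5
    apply (insert a f, rule good_lin[OF G, where pa="0" and qa="7" and ra="-8" and pb="-1" and qb="4" and rb="-4" and pc="0" and qc="-6" and rc="7"])
    apply linarith+
    by (simp_all add: power2_eq_square algebra_simps)
qed


lemma GE'_good: "M \<in> GE' \<Longrightarrow> good t \<Longrightarrow> good (mat_app M t)"
proof (induction M arbitrary: t rule: GE'.induct)
  case (gen M)
  then have "M = M1 \<or> M = M2 \<or> M = M3 \<or> M = M4 \<or> M = M5" by simp
  then show ?case using gen.prems good_M1 good_M2 good_M3 good_M4 good_M5 by blast
next
  case (mult M N)
  then show ?case by (simp add: mat_app_mult)
qed

lemma upper_assoc: "good (x,y,z) \<Longrightarrow> upper (assoc_pair (x,y,z)) = (x,y,z)"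
  unfolding upper_def assoc_pair_def
  by (rule the_equality) (auto simp: good_def)

lemma good_PE: "good (x,y,z) \<Longrightarrow> assoc_pair (x,y,z) \<in> PE"
  unfolding PE_def
  by (rule imageI) (auto simp: good_def primitive_eisenstein_def eisenstein_triple_def)

lemma unique_pair: "Q \<in> PE \<Longrightarrow> (x,y,z) \<in> Q \<Longrightarrow> Q = assoc_pair (x,y,z)"
proof -
  assume "Q \<in> PE" "(x,y,z) \<in> Q"
  then obtain a b c where Q: "Q = {(a,b,c), (b-a,b,c)}" and m: "(x,y,z) \<in> {(a,b,c), (b-a,b,c)}"
    unfolding PE_def assoc_pair_def by auto
  from m have "(x = a \<or> x = b - a) \<and> y = b \<and> z = c" by blast
  then show ?thesis unfolding Q assoc_pair_def by auto
qed

lemma gcd_diff: "gcd (b - a) b = gcd a (b::int)"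
  by (rule gcd_diff2)

lemma not_double:
  fixes a c :: int
  assumes "a^2 - a*(2*a) + (2*a)^2 = c^2" "gcd (gcd a (2*a)) c = 1"
  shows False
proof -
  have g: "gcd a c = 1" using assms(2) by (simp add: gcd.commute)
  have e: "c^2 = 3*a^2" using assms(1) by (simp add: power2_eq_square algebra_simps)
  have p: "prime (3::int)" by simp
  have "3 dvd c^2" using e by simp
  then have "3 dvd c" using p prime_dvd_power by blast
  then obtain k where k: "c = 3*k" by blast
  then have "3*a^2 = 9*k^2" using e by (simp add: power2_eq_square)
  then have "a^2 = 3*k^2" by simp
  then have "3 dvd a^2" by simp
  then have "3 dvd a" using p prime_dvd_power by blast
  with \<open>3 dvd c\<close> have "3 dvd gcd a c" by simp
  then show False using g by simp
qed

lemma PE_upper: "P \<in> PE \<Longrightarrow> good (upper P) \<and> P = assoc_pair (upper P)"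
proof -
  assume "P \<in> PE"
  then obtain a b c where P: "P = assoc_pair (a,b,c)" and pr: "primitive_eisenstein (a,b,c)"
    unfolding PE_def by auto
  from pr have h: "0 \<le> a" "a \<le> b" "0 \<le> c" "a^2 - a*b + b^2 = c^2" "gcd (gcd a b) c = 1"
    by (auto simp: primitive_eisenstein_def eisenstein_triple_def)
  have "b \<noteq> 2*a"
  proof
    assume "b = 2*a"
    then show False using h(4,5) not_double[of a c] by simp
  qed
  then consider "2*a < b" | "b < 2*a" by linarith
  then show ?thesis
  proof cases
    case 1
    then have "good (a,b,c)" using h by (simp add: good_def)
    then show ?thesis using P upper_assoc by simp
  next
    case 2
    have g: "good (b-a,b,c)" using h 2 gcd_diff
      by (simp add: good_def power2_eq_square algebra_simps)
    have "P = assoc_pair (b-a,b,c)" using P by (auto simp: assoc_pair_def)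
    then show ?thesis using g upper_assoc by simp
  qed
qed

lemma act_eq: "good (mat_app M (upper P)) \<Longrightarrow> act M P = assoc_pair (mat_app M (upper P))"
proof -
  assume g: "good (mat_app M (upper P))"
  obtain x y z where s: "mat_app M (upper P) = (x,y,z)" by (cases "mat_app M (upper P)") auto
  have gs: "good (x,y,z)" using g s by simp
  show ?thesis unfolding act_def s
  proof (rule the_equality)
    show "assoc_pair (x,y,z) \<in> PE \<and> (x,y,z) \<in> assoc_pair (x,y,z)"
      using good_PE[OF gs] by (simp add: assoc_pair_def)
  next
    fix Q assume "Q \<in> PE \<and> (x,y,z) \<in> Q"
    then show "Q = assoc_pair (x,y,z)" using unique_pair by auto
  qed
qed

theorem lemma6p3:
  shows "\<forall>M\<in>GE'. \<forall>P\<in>PE.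
           (\<exists>!Q. Q \<in> PE \<and> mat_app M (upper P) \<in> Q)
         \<and> (\<forall>N\<in>GE'. act (M ** N) P = act M (act N P))"
proof (intro ballI conjI)
  fix M P assume M: "M \<in> GE'" and P: "P \<in> PE"
  have u: "good (upper P)" using PE_upper[OF P] by simp
  obtain x y z where s: "mat_app M (upper P) = (x,y,z)" by (cases "mat_app M (upper P)") auto
  have gs: "good (x,y,z)" using GE'_good[OF M u] s by simp
  show "\<exists>!Q. Q \<in> PE \<and> mat_app M (upper P) \<in> Q"
  proof (rule ex1I[of _ "assoc_pair (x,y,z)"])
    show "assoc_pair (x,y,z) \<in> PE \<and> mat_app M (upper P) \<in> assoc_pair (x,y,z)"
      using good_PE[OF gs] s by (simp add: assoc_pair_def)
  next
    fix Q assume "Q \<in> PE \<and> mat_app M (upper P) \<in> Q"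
    then show "Q = assoc_pair (x,y,z)" using s unique_pair by auto
  qed
  next
  fix M P N assume M: "M \<in> GE'" and P: "P \<in> PE"
  have u: "good (upper P)" using PE_upper[OF P] by simp
  {
    fix N assume N: "N \<in> GE'"
    have MN: "M ** N \<in> GE'" using M N by (rule GE'.mult)
    obtain x' y' z' where s': "mat_app N (upper P) = (x',y',z')" by (cases "mat_app N (upper P)") auto
    have gs': "good (x',y',z')" using GE'_good[OF N u] s' by simp
    have aN: "act N P = assoc_pair (x',y',z')" using act_eq[of N P] gs' s' by simp
    have up: "upper (act N P) = mat_app N (upper P)" using aN upper_assoc[OF gs'] s' by simp
    have g2: "good (mat_app (M ** N) (upper P))" using GE'_good[OF MN u] .
    have "act (M ** N) P = assoc_pair (mat_app M (mat_app N (upper P)))"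
      using act_eq[OF g2] by (simp add: mat_app_mult)
    also have "\<dots> = act M (act N P)"
      using act_eq[of M "act N P"] g2 up by (simp add: mat_app_mult)
    finally show "act (M ** N) P = act M (act N P)" .
  }
qed

end
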